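(* Let $\varphi:\mathbb{R}^n\to(-\infty,\infty]$ be prox-bounded and lower semicontinuous around $\bar x\in\operatorname{dom}\varphi$. Then for all $\lambda>0$ sufficiently small the following are equivalent: (i) $\bar x$ is a local minimizer of $\varphi$; (ii) $\bar x$ is a local minimizer of the Moreau envelope $e_\lambda\varphi$.
   Context: For a proper function $\varphi:\mathbb{R}^n\to(-\infty,\infty]$ and $\lambda>0$, the Moreau envelope is $e_\lambda\varphi(x):=\inf_{y\in\mathbb{R}^n}\{\varphi(y)+\frac{1}{2\lambda}\|y-x\|^2\}$ and the proximal mapping is $\operatorname{Prox}_{\lambda\varphi}(x):=\operatorname{argmin}_{y}\{\varphi(y)+\frac{1}{2\lambda}\|y-x\|^2\}$. The function $\varphi$ is prox-bounded if there is $\lambda>0$ with $e_\lambda\varphi(x)>-\infty$ for some $x$. A point $\bar x\in\operatorname{dom}\varphi$ is a local minimizer of $\varphi$ if $\varphi(x)\ge\varphi(\bar x)$ for all $x$ in some neighborhood of $\bar x$. *)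

theory Defs
  imports "HOL-Analysis.Analysis"
begin

definition edom :: "('a \<Rightarrow> ereal) \<Rightarrow> 'a set" where
  "edom f = {x. f x < \<infinity>}"

definition proper_fun :: "('a \<Rightarrow> ereal) \<Rightarrow> bool" where
  "proper_fun f \<longleftrightarrow> (\<forall>x. f x \<noteq> -\<infinity>) \<and> edom f \<noteq> {}"

definition moreau_env :: "real \<Rightarrow> ('a::real_normed_vector \<Rightarrow> ereal) \<Rightarrow> 'a \<Rightarrow> ereal" where
  "moreau_env lam f x = (INF y. f y + ereal ((norm (y - x))\<^sup>2 / (2 * lam)))"

definition prox_bounded :: "('a::real_normed_vector \<Rightarrow> ereal) \<Rightarrow> bool" where
  "prox_bounded f \<longleftrightarrow> (\<exists>lam>0. \<exists>x. moreau_env lam f x > -\<infinity>)"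

definition lsc_at_pt :: "('a::topological_space \<Rightarrow> ereal) \<Rightarrow> 'a \<Rightarrow> bool" where
  "lsc_at_pt f x \<longleftrightarrow> f x \<le> Liminf (at x) f"

definition lsc_around :: "('a::metric_space \<Rightarrow> ereal) \<Rightarrow> 'a \<Rightarrow> bool" where
  "lsc_around f x \<longleftrightarrow> (\<exists>e>0. \<forall>z\<in>ball x e. lsc_at_pt f z)"

definition local_minimizer :: "('a::metric_space \<Rightarrow> ereal) \<Rightarrow> 'a \<Rightarrow> bool" where
  "local_minimizer f x \<longleftrightarrow> x \<in> edom f \<and> (\<exists>e>0. \<forall>z\<in>ball x e. f x \<le> f z)"

end

theory Submission
  imports Defs
begin

lemma lowbound:
  fixes phi :: "'a::real_normed_vector \<Rightarrow> ereal"
  assumes pr: "proper_fun phi" and l0: "lam0 > 0" and e: "moreau_env lam0 phi x0 > -\<infinity>"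
  shows "\<exists>M. \<forall>y. ereal (M - (1/lam0) * (norm (y - xbar))\<^sup>2) \<le> phi y"
proof -
  obtain m :: real where m: "ereal m < moreau_env lam0 phi x0"
    using e by (cases "moreau_env lam0 phi x0") (auto, meson lt_ex)
  define D where "D = norm (xbar - x0)"
  show ?thesis
  proof (intro exI allI)
    fix y
    show "ereal (m - D^2/lam0 - (1/lam0) * (norm (y - xbar))\<^sup>2) \<le> phi y"
    proof (cases "phi y")
      case (real q)
      have "moreau_env lam0 phi x0 \<le> phi y + ereal ((norm (y - x0))\<^sup>2 / (2 * lam0))"
        unfolding moreau_env_def by (rule INF_lower) simp
      with real have "moreau_env lam0 phi x0 \<le> ereal (q + (norm (y - x0))\<^sup>2 / (2 * lam0))" by simp
      with m have "ereal m < ereal (q + (norm (y - x0))\<^sup>2 / (2 * lam0))" by (rule less_le_trans)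
      then have mq: "m < q + (norm (y - x0))\<^sup>2 / (2 * lam0)" by simp
      have tri: "norm (y - x0) \<le> norm (y - xbar) + D"
        unfolding D_def using norm_triangle_ineq[of "y - xbar" "xbar - x0"] by simp
      have "(norm (y - x0))\<^sup>2 \<le> (norm (y - xbar) + D)^2"
        using tri by (intro power_mono) auto
      also have "\<dots> \<le> 2 * (norm (y - xbar))\<^sup>2 + 2 * D^2"
      proof -
        have "0 \<le> (norm (y - xbar) - D)^2" by simp
        then show ?thesis unfolding power2_sum power2_diff by linarith
      qed
      finally have h: "(norm (y - x0))\<^sup>2 / (2 * lam0) \<le> ((norm (y - xbar))\<^sup>2 + D^2) / lam0"
        using l0 by (simp add: field_simps)
      have "((norm (y - xbar))\<^sup>2 + D^2) / lam0 = D^2/lam0 + (1/lam0) * (norm (y - xbar))\<^sup>2"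
        by (simp add: add_divide_distrib)
      with h mq real show ?thesis by simp
    next
      case PInf then show ?thesis by simp
    next
      case MInf then show ?thesis using pr unfolding proper_fun_def by auto
    qed
  qed
qed

lemma env_le:
  fixes phi :: "'a::real_normed_vector \<Rightarrow> ereal"
  shows "moreau_env lam phi x \<le> phi y + ereal ((norm (y - x))\<^sup>2 / (2 * lam))"
  unfolding moreau_env_def by (rule INF_lower) simp

lemma env_le_self:
  fixes phi :: "'a::real_normed_vector \<Rightarrow> ereal"
  shows "moreau_env lam phi x \<le> phi x"
  using env_le[of lam phi x x] by simp

lemma ii_i:
  fixes phi :: "'a::real_normed_vector \<Rightarrow> ereal"
  assumes pr: "proper_fun phi" and xd: "xbar \<in> edom phi" and lsc: "lsc_at_pt phi xbar"
    and lam: "lam > 0" and K: "K \<ge> 0" "2 * lam * K \<le> 1"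
    and lb: "\<forall>y. ereal (M - K * (norm (y - xbar))\<^sup>2) \<le> phi y"
    and lm: "local_minimizer (moreau_env lam phi) xbar"
  shows "local_minimizer phi xbar"
proof -
  let ?e = "moreau_env lam phi"
  obtain d where d: "d > 0" "\<forall>z\<in>ball xbar d. ?e xbar \<le> ?e z"
    using lm unfolding local_minimizer_def by blast
  have eM: "ereal M \<le> ?e xbar"
    unfolding moreau_env_def
  proof (rule INF_greatest)
    fix y
    have "ereal M + 0 \<le> ereal (M - K * (norm (y - xbar))\<^sup>2) + ereal ((norm (y - xbar))\<^sup>2 / (2 * lam))"
    proof -
      have Kl: "K \<le> 1 / (2 * lam)" using K lam by (simp add: field_simps)
      have "K * (norm (y - xbar))\<^sup>2 \<le> (1 / (2 * lam)) * (norm (y - xbar))\<^sup>2"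
        using Kl by (intro mult_right_mono) auto
      then have "K * (norm (y - xbar))\<^sup>2 \<le> (norm (y - xbar))\<^sup>2 / (2 * lam)" by simp
      then show ?thesis by simp
    qed
    also have "\<dots> \<le> phi y + ereal ((norm (y - xbar))\<^sup>2 / (2 * lam))"
      using lb by (intro add_right_mono) auto
    finally show "ereal M \<le> phi y + ereal ((norm (y - xbar))\<^sup>2 / (2 * lam))" by simp
  qed
  have eq: "?e xbar = phi xbar"
  proof (rule ccontr)
    assume "?e xbar \<noteq> phi xbar"
    with env_le_self[of lam phi xbar] have lt: "?e xbar < phi xbar" by simp
    obtain p where p: "phi xbar = ereal p"
      using xd pr unfolding edom_def proper_fun_def by (cases "phi xbar") auto
    obtain v where v: "?e xbar = ereal v"
      using lt eM p by (cases "?e xbar") auto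
    have vp: "v < p" using lt v p by simp
    define c where "c = (v + p) / 2"
    have cp: "ereal c < phi xbar" "v < c" using vp p unfolding c_def by auto
    have "eventually (\<lambda>z. ereal c < phi z) (at xbar)"
      using lsc cp(1) unfolding lsc_at_pt_def le_Liminf_iff by (meson order_less_le_trans)
    then obtain r0 where r0: "r0 > 0" "\<forall>z. z \<noteq> xbar \<and> dist z xbar < r0 \<longrightarrow> ereal c < phi z"
      unfolding eventually_at by auto
    have r0': "\<forall>z. dist z xbar < r0 \<longrightarrow> ereal c < phi z"
      using r0 cp by metis
    define eta where "eta = min (c - v) (min (r0^2 / (4*lam)) (d * r0 / (8 * lam)))"
    have eta: "eta > 0" "eta \<le> c - v" "eta \<le> r0^2 / (4*lam)" "eta \<le> d * r0 / (8 * lam)"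
      unfolding eta_def using cp r0 d lam by auto
    have "?e xbar < ereal (v + eta)" using v eta by simp
    then obtain y where y: "phi y + ereal ((norm (y - xbar))\<^sup>2 / (2 * lam)) < ereal (v + eta)"
      unfolding moreau_env_def INF_less_iff by auto
    define t where "t = norm (y - xbar)"
    have "phi y \<noteq> \<infinity>" using y by auto
    moreover have "phi y \<noteq> -\<infinity>" using pr unfolding proper_fun_def by auto
    ultimately obtain q where q: "phi y = ereal q" by (cases "phi y") auto
    have qt: "q + t^2 / (2 * lam) < v + eta" using y q unfolding t_def by simp
    have "t^2 / (2*lam) \<ge> 0" using lam by simp
    then have "q < c" using qt eta by linarith
    then have "\<not> ereal c < phi y" using q by simp
    then have "\<not> dist y xbar < r0" using r0' by blast
    then have "t \<ge> r0" by (simp add: t_def dist_norm)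
    show False
    proof (cases "t < d")
      case True
      have "?e y \<le> phi y" by (rule env_le_self)
      moreover have "y \<in> ball xbar d" using True unfolding t_def by (simp add: dist_norm norm_minus_commute)
      ultimately have "ereal v \<le> ereal q" using d v q by (metis order_trans)
      moreover have "r0^2 \<le> t^2" using \<open>t \<ge> r0\<close> r0 by (intro power_mono) auto
      then have "r0^2 / (2*lam) \<le> t^2/(2*lam)" using lam by (intro divide_right_mono) auto
      moreover have "r0^2 / (4*lam) < r0^2 / (2*lam)" using lam r0 by (simp add: field_simps)
      ultimately show False using qt eta by simp
    next
      case False
      then have tpos: "t > 0" "t \<ge> d" using d by auto
      define s where "s = d / (2 * t)"
      have s: "0 < s" "s \<le> 1/2" "s * t = d / 2" using tpos d unfolding s_def by (auto simp: field_simps)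
      define x where "x = xbar + s *\<^sub>R (y - xbar)"
      have "y - x = (1 - s) *\<^sub>R (y - xbar)" unfolding x_def by (simp add: algebra_simps)
      then have nyx: "norm (y - x) = (1 - s) * t" using s unfolding t_def by simp
      have xin: "x \<in> ball xbar d" unfolding x_def using s d tpos
        by (simp add: dist_norm t_def[symmetric])
      have ex: "?e x \<le> ereal (q + ((1 - s) * t)^2 / (2 * lam))"
        using env_le[of lam phi x y] q nyx by simp
      have sq: "((1 - s) * t)^2 \<le> t^2 - s * t * t"
      proof -
        have "((1 - s) * t)^2 = t^2 - s*t*t - s*t*t*(1 - s)" by (simp add: power2_eq_square algebra_simps)
        moreover have "s*t*t*(1-s) \<ge> 0" using s tpos by simp
        ultimately show ?thesis by linarith
      qed
      have a1: "((1 - s) * t)^2 / (2*lam) \<le> (t^2 - s * t * t) / (2*lam)" using sq lam by (intro divide_right_mono) auto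
      have stt: "s * t * t \<ge> d / 2 * r0"
      proof -
        have "d / 2 * r0 \<le> d / 2 * t" using \<open>t \<ge> r0\<close> d by (intro mult_left_mono) auto
        moreover have "s * t * t = d / 2 * t" by (simp only: s(3))
        ultimately show ?thesis by linarith
      qed
      have a2: "(s * t * t) / (2 * lam) \<ge> (d/2 * r0) / (2*lam)" using stt lam by (intro divide_right_mono) auto
      have a3: "(d/2 * r0) / (2*lam) = 2 * (d * r0 / (8 * lam))" by (simp add: field_simps)
      have a4: "(t^2 - s * t * t) / (2*lam) = t^2/(2*lam) - (s * t * t) / (2 * lam)" by (simp add: diff_divide_distrib)
      have a5: "d * r0 / (8 * lam) > 0" using d r0 lam by simp
      have gen: "\<And>A B C E. A \<le> B - C \<Longrightarrow> C \<ge> 2*E \<Longrightarrow> q + B < v + eta \<Longrightarrow> eta \<le> E \<Longrightarrow> E > 0 \<Longrightarrow> q + A < v"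
        by linarith
      have "q + ((1 - s) * t)^2 / (2 * lam) < v"
        using gen[of "((1 - s) * t)^2 / (2 * lam)" "t^2/(2*lam)" "(s * t * t) / (2 * lam)" "d * r0 / (8 * lam)"]
          a1 a2 a3 a4 a5 qt eta(4) by argo
      then have "ereal (q + ((1 - s) * t)^2 / (2 * lam)) < ereal v" by simp
      with ex have "?e x < ereal v" by (rule le_less_trans)
      then have "?e x < ?e xbar" using v by simp
      with xin d show False by (meson not_le)
    qed
  qed
  show ?thesis unfolding local_minimizer_def
  proof (intro conjI exI[of _ d] ballI)
    show "xbar \<in> edom phi" by (rule xd)
    show "d > 0" by (rule d)
    fix z assume "z \<in> ball xbar d"
    then show "phi xbar \<le> phi z" using d eq env_le_self[of lam phi z] by (metis order_trans)
  qed
qed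


lemma i_ii:
  fixes phi :: "'a::real_normed_vector \<Rightarrow> ereal"
  assumes pr: "proper_fun phi" and lm: "local_minimizer phi xbar" and K: "K \<ge> 0"
    and lb: "\<forall>y. ereal (M - K * (norm (y - xbar))\<^sup>2) \<le> phi y"
  shows "\<exists>lam1>0. \<forall>lam. 0 < lam \<and> lam < lam1 \<longrightarrow> local_minimizer (moreau_env lam phi) xbar"
proof -
  obtain ep where ep: "ep > 0" "\<forall>z\<in>ball xbar ep. phi xbar \<le> phi z" and xd: "xbar \<in> edom phi"
    using lm unfolding local_minimizer_def by blast
  obtain p where p: "phi xbar = ereal p"
    using xd pr unfolding edom_def proper_fun_def by (cases "phi xbar") auto
  define L where "L = K + \<bar>p - M\<bar> / ep^2 + 1"
  have Lpos: "L > 0" unfolding L_def using K ep by (simp add: add_nonneg_pos)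
  show ?thesis
  proof (intro exI[of _ "1 / (8 * L)"] conjI allI impI)
    show "1 / (8 * L) > 0" using Lpos by simp
    fix lam assume lam: "0 < lam \<and> lam < 1 / (8 * L)"
    let ?e = "moreau_env lam phi"
    have Ll: "L < 1 / (8 * lam)" using lam Lpos by (simp add: field_simps)
    have up: "?e xbar \<le> ereal p" using env_le_self[of lam phi xbar] p by simp
    have low: "ereal p \<le> ?e x" if x: "x \<in> ball xbar (ep/2)" for x
      unfolding moreau_env_def
    proof (rule INF_greatest)
      fix y
      define t where "t = norm (y - xbar)"
      have nn: "0 \<le> (norm (y - x))\<^sup>2 / (2 * lam)" using lam by simp
      show "ereal p \<le> phi y + ereal ((norm (y - x))\<^sup>2 / (2 * lam))"
      proof (cases "t < ep")
        case True
        then have "y \<in> ball xbar ep" unfolding t_def by (simp add: dist_norm norm_minus_commute)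
        then have "ereal p \<le> phi y" using ep p by metis
        moreover have "phi y \<le> phi y + ereal ((norm (y - x))\<^sup>2 / (2 * lam))"
          using nn by (simp add: ereal_le_add_self)
        ultimately show ?thesis by (rule order_trans)
      next
        case False
        have dx: "norm (x - xbar) < ep / 2" using x by (simp add: dist_norm norm_minus_commute)
        have "t \<le> norm (y - x) + norm (x - xbar)" unfolding t_def
          using norm_triangle_ineq[of "y - x" "x - xbar"] by simp
        then have h: "t / 2 \<le> norm (y - x)" using dx False by linarith
        have "(t/2)^2 \<le> (norm (y - x))^2" using h False ep by (intro power_mono) auto
        then have h2: "t^2 / (8 * lam) \<le> (norm (y - x))\<^sup>2 / (2 * lam)"
          using lam by (simp add: field_simps power2_eq_square)
        have tt: "ep^2 \<le> t^2" using False ep by (intro power_mono) auto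
        have "\<bar>p - M\<bar> \<le> \<bar>p - M\<bar> / ep^2 * t^2"
        proof -
          have "1 \<le> t^2 / ep^2" using tt ep by simp
          then have "\<bar>p - M\<bar> * 1 \<le> \<bar>p - M\<bar> * (t^2 / ep^2)" by (intro mult_left_mono) auto
          then show ?thesis by simp
        qed
        moreover have "L * t^2 \<le> t^2 / (8 * lam)"
        proof -
          have "L * t^2 \<le> (1 / (8 * lam)) * t^2" using Ll by (intro mult_right_mono) auto
          then show ?thesis by simp
        qed
        moreover have "L * t^2 = K * t^2 + \<bar>p - M\<bar> / ep^2 * t^2 + t^2" unfolding L_def by (simp add: algebra_simps)
        moreover have "t^2 \<ge> 0" by simp
        ultimately have r: "p \<le> (M - K * t^2) + (norm (y - x))\<^sup>2 / (2 * lam)" using h2 by linarith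
        have "ereal p \<le> ereal (M - K * t^2) + ereal ((norm (y - x))\<^sup>2 / (2 * lam))"
          using r by simp
        also have "\<dots> \<le> phi y + ereal ((norm (y - x))\<^sup>2 / (2 * lam))"
          using lb unfolding t_def by (intro add_right_mono) auto
        finally show ?thesis .
      qed
    qed
    show "local_minimizer ?e xbar" unfolding local_minimizer_def edom_def
    proof (intro conjI exI[of _ "ep/2"] ballI CollectI)
      have "ereal p < \<infinity>" by simp
      with up show "?e xbar < \<infinity>" by (rule le_less_trans)
      show "ep/2 > 0" using ep by simp
      fix z assume "z \<in> ball xbar (ep/2)"
      then show "?e xbar \<le> ?e z" using up low[of z] by (rule_tac order_trans) auto
    qed
  qed
qed

theorem theorem3p2:
  fixes phi :: "real ^ 'n \<Rightarrow> ereal" and xbar :: "real ^ 'n"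
  assumes "proper_fun phi"
    and "prox_bounded phi"
    and "lsc_around phi xbar"
    and "xbar \<in> edom phi"
  shows "\<exists>lam0>0. \<forall>lam. 0 < lam \<and> lam < lam0 \<longrightarrow>
           (local_minimizer phi xbar \<longleftrightarrow> local_minimizer (moreau_env lam phi) xbar)"
proof -
  obtain l0 x0 where l0: "l0 > 0" "moreau_env l0 phi x0 > -\<infinity>"
    using assms(2) unfolding prox_bounded_def by blast
  obtain M where M: "\<forall>y. ereal (M - (1/l0) * (norm (y - xbar))\<^sup>2) \<le> phi y"
    using lowbound[OF assms(1) l0] by blast
  have lsc: "lsc_at_pt phi xbar"
    using assms(3) unfolding lsc_around_def by auto
  show ?thesis
  proof (cases "local_minimizer phi xbar")
    case True
    obtain lam1 where "lam1 > 0" "\<forall>lam. 0 < lam \<and> lam < lam1 \<longrightarrow> local_minimizer (moreau_env lam phi) xbar"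
      using i_ii[OF assms(1) True _ M] l0 by auto
    then show ?thesis using True by blast
  next
    case False
    show ?thesis
    proof (intro exI[of _ "l0/2"] conjI allI impI)
      show "l0/2 > 0" using l0 by simp
      fix lam assume lam: "0 < lam \<and> lam < l0/2"
      have two: "2 * lam * (1/l0) \<le> 1" using lam l0 by (simp add: field_simps)
      have lp: "lam > 0" using lam by simp
      have kp: "(1/l0) \<ge> 0" using l0 by simp
      have "\<not> local_minimizer (moreau_env lam phi) xbar"
      proof
        assume h: "local_minimizer (moreau_env lam phi) xbar"
        show False using ii_i[OF assms(1) assms(4) lsc lp kp two M h] False by simp
      qed
      then show "local_minimizer phi xbar = local_minimizer (moreau_env lam phi) xbar"
        using False by simp
    qed
  qed
qed

end
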